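(* Fix an integer $n\ge 2$, and assume that for every choice of positive integers $w_1,\ldots,w_n$ one has either $\mathrm{ML}(w_1,\ldots,w_n)=\frac{s}{ns+1}$ for some $s\in\mathbb{N}$ or $\mathrm{ML}(w_1,\ldots,w_n)\ge\frac1n$. Then for any positive real numbers $v_1,\ldots,v_n$, either $\mathrm{ML}(v_1,\ldots,v_n)=\frac{s}{ns+1}$ for some $s\in\mathbb{N}$, or $\mathrm{ML}(v_1,\ldots,v_n)\ge\frac1n$.
   Context: For a real number $x$, $\Vert x\Vert$ denotes the distance from $x$ to the nearest integer. For positive real numbers $v_1,\ldots,v_k$, the maximum loneliness is $\mathrm{ML}(v_1,\ldots,v_k)=\sup_{t\in\mathbb{R}}\min_{1\le i\le k}\Vert t v_i\Vert$ (for integer speeds the supremum is a maximum). Here $\mathbb{N}=\{1,2,3,\ldots\}$. *)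

theory Defs
  imports "HOL-Analysis.Analysis"
begin

definition dist_nint :: "real \<Rightarrow> real" where
  "dist_nint x = \<bar>x - of_int (round x)\<bar>"

definition maxlone :: "nat \<Rightarrow> (nat \<Rightarrow> real) \<Rightarrow> real" where
  "maxlone n v = (SUP t\<in>(UNIV::real set). Min ((\<lambda>i. dist_nint (t * v i)) ` {..<n}))"

end

theory Submission
  imports Defs "HOL-Analysis.Kronecker_Approximation_Theorem"
begin

lemma dn_le: "dist_nint x \<le> \<bar>x - of_int m\<bar>"
  unfolding dist_nint_def by (rule round_diff_minimal)

lemma dn_nonneg: "dist_nint x \<ge> 0"
  unfolding dist_nint_def by simp

lemma dn_half: "dist_nint x \<le> 1/2"
  unfolding dist_nint_def using of_int_round_ge[of x] of_int_round_le[of x] by linarith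

lemma dn_lip: "dist_nint x \<le> dist_nint y + \<bar>x - y\<bar>"
proof -
  have "dist_nint x \<le> \<bar>x - of_int (round y)\<bar>" by (rule dn_le)
  also have "\<dots> \<le> \<bar>x - y\<bar> + \<bar>y - of_int (round y)\<bar>" by linarith
  finally show ?thesis unfolding dist_nint_def by linarith
qed

lemma dn_per: "dist_nint (x + of_int k) = dist_nint x"
proof -
  have "dist_nint (x + of_int k) \<le> \<bar>x + of_int k - of_int (round x + k)\<bar>" by (rule dn_le)
  then have a: "dist_nint (x + of_int k) \<le> dist_nint x" unfolding dist_nint_def by simp
  have "dist_nint x \<le> \<bar>x - of_int (round (x + of_int k) - k)\<bar>" by (rule dn_le)
  then have "dist_nint x \<le> dist_nint (x + of_int k)" unfolding dist_nint_def
    by (simp add: algebra_simps)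
  with a show ?thesis by linarith
qed

definition fmin :: "nat \<Rightarrow> (nat \<Rightarrow> real) \<Rightarrow> real \<Rightarrow> real" where
  "fmin n v t = Min ((\<lambda>i. dist_nint (t * v i)) ` {..<n})"

lemma ml_fmin: "maxlone n v = (SUP t. fmin n v t)"
  unfolding maxlone_def fmin_def by simp

lemma fmin_le_half: "n > 0 \<Longrightarrow> fmin n v t \<le> 1/2"
proof -
  assume "n > 0"
  then have "fmin n v t \<le> dist_nint (t * v 0)" unfolding fmin_def by (intro Min_le) auto
  then show ?thesis using dn_half[of "t * v 0"] by linarith
qed

lemma bdd_fmin: "n > 0 \<Longrightarrow> bdd_above (range (fmin n v))"
  using fmin_le_half by (intro bdd_aboveI[of _ "1/2"]) auto

lemma fmin_le_ml: "n > 0 \<Longrightarrow> fmin n v t \<le> maxlone n v"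
  unfolding ml_fmin by (rule cSUP_upper) (auto intro: bdd_fmin)

lemma ml_le: "n > 0 \<Longrightarrow> (\<And>t. fmin n v t \<le> c) \<Longrightarrow> maxlone n v \<le> c"
  unfolding ml_fmin by (rule cSUP_least) auto

lemma fmin_lip:
  assumes "n > 0" "\<And>i. i < n \<Longrightarrow> \<bar>t * a i - s * b i\<bar> \<le> e"
  shows "fmin n a t \<le> fmin n b s + e"
proof -
  have "fmin n b s \<in> (\<lambda>i. dist_nint (s * b i)) ` {..<n}"
    unfolding fmin_def using assms(1) by (intro Min_in) auto
  then obtain j where j: "j < n" "fmin n b s = dist_nint (s * b j)" by auto
  have "fmin n a t \<le> dist_nint (t * a j)" unfolding fmin_def using j by (intro Min_le) auto
  also have "\<dots> \<le> dist_nint (s * b j) + \<bar>t * a j - s * b j\<bar>" by (rule dn_lip)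
  finally show ?thesis using j assms(2)[of j] by linarith
qed

lemma ml_scale:
  assumes "c > 0"
  shows "maxlone n (\<lambda>i. c * u i) = maxlone n u"
proof -
  have "maxlone n (\<lambda>i. c * u i) = (SUP t. fmin n u (t * c))"
    unfolding ml_fmin fmin_def by (simp add: mult.assoc mult.commute mult.left_commute)
  also have "\<dots> = Sup (fmin n u ` ((\<lambda>t. t * c) ` UNIV))" by (simp add: image_comp)
  also have "(\<lambda>t. t * c) ` UNIV = UNIV"
  proof -
    have "x \<in> (\<lambda>t. t * c) ` UNIV" for x
      using assms by (intro image_eqI[of _ _ "x / c"]) auto
    then show ?thesis by auto
  qed
  finally show ?thesis unfolding ml_fmin by simp
qed


lemma approx_int:
  assumes n0: "n > 0" and pos: "\<forall>i<n. v i > 0" and e: "\<epsilon> > 0"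
  shows "\<exists>w::nat\<Rightarrow>nat. (\<forall>i<n. w i > 0) \<and> \<bar>maxlone n (\<lambda>i. real (w i)) - maxlone n v\<bar> \<le> 2 * \<epsilon>"
proof -
  define M where "M = maxlone n v"
  have "M - \<epsilon> < (SUP t. fmin n v t)" using e unfolding M_def ml_fmin by simp
  then obtain t0 where t0: "M - \<epsilon> < fmin n v t0"
    using less_cSUP_iff[OF _ bdd_fmin[OF n0, of v]] by auto
  define m where "m = Min (v ` {..<n})"
  have "m \<in> v ` {..<n}" unfolding m_def using n0 by (intro Min_in) auto
  then have m0: "m > 0" using pos by auto
  have mle: "m \<le> v i" if "i < n" for i unfolding m_def using that by (intro Min_le) auto
  define \<delta> where "\<delta> = min (\<epsilon> / (\<bar>t0\<bar> + 1)) (m / 2)"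
  have d0: "\<delta> > 0" unfolding \<delta>_def using e m0 by (simp add: add_pos_nonneg)
  have d1: "\<delta> * (\<bar>t0\<bar> + 1) \<le> \<epsilon>"
  proof -
    have "\<delta> \<le> \<epsilon> / (\<bar>t0\<bar> + 1)" unfolding \<delta>_def by simp
    then show ?thesis by (simp add: pos_le_divide_eq add_pos_nonneg)
  qed
  have d2: "\<delta> \<le> \<epsilon>" using d1 d0 mult_left_mono[of 1 "\<bar>t0\<bar> + 1" \<delta>] by linarith
  have d3: "\<delta> < m" unfolding \<delta>_def using m0 by simp
  obtain N :: nat where N: "N > 0" "1 / real N < \<delta>"
    using d0 by (metis gr_zeroI inverse_eq_divide real_arch_inverse)
  obtain q p where q: "0 < q" and qp: "\<And>i. i < n \<Longrightarrow> \<bar>of_int q * v i - of_int (p i)\<bar> < 1 / real N"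
    using Dirichlet_approx_simult[OF N(1), where \<theta>=v and n=n] by blast
  have qp': "\<bar>of_int q * v i - of_int (p i)\<bar> < \<delta>" if "i < n" for i using qp[OF that] N by linarith
  have q1: "real_of_int q \<ge> 1" using q by simp
  have ppos: "p i > 0" if "i < n" for i
  proof -
    have "real_of_int q * v i \<ge> v i" using q1 pos that by simp
    then have "real_of_int (p i) > 0" using qp'[OF that] mle[OF that] d3 by linarith
    then show ?thesis by simp
  qed
  define w where "w i = nat (p i)" for i
  define u where "u i = real (w i) / real_of_int q" for i
  have wp: "real (w i) = real_of_int (p i)" if "i < n" for i
    unfolding w_def using ppos[OF that] by simp
  have wu: "(\<lambda>i. real (w i)) = (\<lambda>i. real_of_int q * u i)"
  proof
    fix i show "real (w i) = real_of_int q * u i"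
      unfolding u_def using q by simp
  qed
  have mlw: "maxlone n (\<lambda>i. real (w i)) = maxlone n u"
    unfolding wu using q by (intro ml_scale) simp
  have up: "\<bar>t * u i - t * v i\<bar> \<le> \<bar>t\<bar> / of_int q * \<delta>" if "i < n" for i t
  proof -
    have "t * u i - t * v i = t / of_int q * (of_int (p i) - of_int q * v i)"
      unfolding u_def wp[OF that] using q by (simp add: field_simps)
    then have "\<bar>t * u i - t * v i\<bar> = \<bar>t\<bar> / of_int q * \<bar>of_int q * v i - of_int (p i)\<bar>"
      using q by (simp add: abs_mult abs_minus_commute)
    also have "\<dots> \<le> \<bar>t\<bar> / of_int q * \<delta>"
      using qp'[OF that] q by (intro mult_left_mono) auto
    finally show ?thesis .
  qed
  have b1: "maxlone n u \<le> M + \<epsilon>"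
  proof (rule ml_le[OF n0])
    fix t :: real
    define k where "k = \<lfloor>t / of_int q\<rfloor>"
    define t' where "t' = t - of_int k * of_int q"
    have t'0: "t' \<ge> 0" and t'1: "t' \<le> of_int q"
    proof -
      have "of_int k \<le> t / of_int q" "t / of_int q < of_int k + 1" unfolding k_def by linarith+
      then show "t' \<ge> 0" "t' \<le> of_int q" unfolding t'_def using q
        by (simp_all add: field_simps)
    qed
    have "fmin n u t = fmin n u t'"
    proof -
      have "dist_nint (t * u i) = dist_nint (t' * u i)" if "i < n" for i
      proof -
        have "t * u i = t' * u i + of_int (k * p i)"
          unfolding t'_def u_def wp[OF that] using q by (simp add: field_simps)
        then show ?thesis using dn_per[of "t' * u i" "k * p i"] by simp
      qed
      then show ?thesis unfolding fmin_def by (metis (no_types, lifting) image_cong lessThan_iff)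
    qed
    also have "\<dots> \<le> fmin n v t' + \<epsilon>"
    proof (rule fmin_lip[OF n0])
      fix i assume i: "i < n"
      have "\<bar>t'\<bar> / of_int q \<le> 1" using t'0 t'1 q by simp
      then have "\<bar>t'\<bar> / of_int q * \<delta> \<le> \<delta>" using d0 mult_right_mono[of "\<bar>t'\<bar> / of_int q" 1 \<delta>] by linarith
      then show "\<bar>t' * u i - t' * v i\<bar> \<le> \<epsilon>" using up[OF i, of t'] d2 by linarith
    qed
    also have "\<dots> \<le> M + \<epsilon>" unfolding M_def using fmin_le_ml[OF n0] by simp
    finally show "fmin n u t \<le> M + \<epsilon>" .
  qed
  have b2: "M - \<epsilon> \<le> maxlone n u + \<epsilon>"
  proof -
    have "fmin n v t0 \<le> fmin n u t0 + \<epsilon>"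
    proof (rule fmin_lip[OF n0])
      fix i assume i: "i < n"
      have "\<bar>t0\<bar> * 1 \<le> \<bar>t0\<bar> * of_int q" using q1 by (intro mult_left_mono) auto
      then have "\<bar>t0\<bar> / of_int q \<le> \<bar>t0\<bar>" using q by (subst pos_divide_le_eq) auto
      then have "\<bar>t0\<bar> / of_int q \<le> \<bar>t0\<bar> + 1" by linarith
      then have "\<bar>t0\<bar> / of_int q * \<delta> \<le> (\<bar>t0\<bar> + 1) * \<delta>" using d0 by (intro mult_right_mono) auto
      then show "\<bar>t0 * v i - t0 * u i\<bar> \<le> \<epsilon>" using up[OF i, of t0] d1
        by (simp add: abs_minus_commute mult.commute)
    qed
    then show ?thesis using t0 fmin_le_ml[OF n0, of u t0] by linarith
  qed
  have "\<bar>maxlone n (\<lambda>i. real (w i)) - maxlone n v\<bar> \<le> 2 * \<epsilon>"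
    unfolding mlw M_def[symmetric] using b1 b2 e by (simp only: abs_le_iff) linarith
  moreover have "\<forall>i<n. w i > 0" using ppos unfolding w_def by auto
  ultimately show ?thesis by blast
qed


lemma g_bound:
  fixes y :: real and n s :: nat
  assumes "n > 0" "real n * y < 1" "real s / (real n * real s + 1) \<le> y"
  shows "s \<le> nat \<lceil>y / (1 - real n * y)\<rceil>"
proof -
  have d: "real n * real s + 1 > 0" by (metis add_pos_nonneg mult_nonneg_nonneg of_nat_0_le_iff zero_less_one add.commute)
  have "real s \<le> y * (real n * real s + 1)" using assms(3) d by (simp add: divide_le_eq)
  then have "real s * (1 - real n * y) \<le> y" by (simp add: algebra_simps)
  then have "real s \<le> y / (1 - real n * y)" using assms(2) by (simp add: le_divide_eq)
  then have "real s \<le> of_int \<lceil>y / (1 - real n * y)\<rceil>" by linarith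
  then show ?thesis by linarith
qed

theorem theorem3p4:
  fixes n :: nat
  assumes n2: "n \<ge> 2"
    and int_case: "\<And>w :: nat \<Rightarrow> nat. (\<forall>i<n. w i > 0) \<Longrightarrow>
        (\<exists>s::nat. s \<ge> 1 \<and> maxlone n (\<lambda>i. real (w i)) = real s / (real n * real s + 1))
        \<or> maxlone n (\<lambda>i. real (w i)) \<ge> 1 / real n"
  shows "\<And>v :: nat \<Rightarrow> real. (\<forall>i<n. v i > 0) \<Longrightarrow>
        (\<exists>s::nat. s \<ge> 1 \<and> maxlone n v = real s / (real n * real s + 1))
        \<or> maxlone n v \<ge> 1 / real n"
proof -
  fix v :: "nat \<Rightarrow> real"
  assume pos: "\<forall>i<n. v i > 0"
  have n0: "n > 0" using n2 by simp
  define x where "x = maxlone n v"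
  show "(\<exists>s::nat. s \<ge> 1 \<and> maxlone n v = real s / (real n * real s + 1))
        \<or> maxlone n v \<ge> 1 / real n"
  proof (cases "x \<ge> 1 / real n")
    case True then show ?thesis unfolding x_def by simp
  next
    case False
    define g where "g s = real s / (real n * real s + 1)" for s :: nat
    define e0 where "e0 = (1 / real n - x) / 2"
    have e0: "e0 > 0" using False unfolding e0_def by simp
    define y where "y = x + e0"
    have aux: "\<And>r z::real. \<not> r \<le> z \<Longrightarrow> z + (r - z) / 2 < r" by (auto simp: field_simps)
    have y1: "y < 1 / real n" unfolding y_def e0_def by (rule aux[OF False])
    have ny: "real n * y < 1" using y1 n0 by (simp add: less_divide_eq mult.commute)
    define B where "B = nat \<lceil>y / (1 - real n * y)\<rceil>"
    define F where "F = g ` {1..B}"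
    have cF: "closed F" unfolding F_def by (intro finite_imp_closed) simp
    have "\<forall>e>0. \<exists>z\<in>F. dist z x < e"
    proof (intro allI impI)
      fix e :: real assume e: "e > 0"
      define e' where "e' = min e e0 / 4"
      have e': "e' > 0" using e e0 unfolding e'_def by simp
      obtain w :: "nat \<Rightarrow> nat" where wpos: "\<forall>i<n. w i > 0"
        and wc: "\<bar>maxlone n (\<lambda>i. real (w i)) - x\<bar> \<le> 2 * e'"
        using approx_int[OF n0 pos e'] unfolding x_def by blast
      have c1: "2 * e' < e" "2 * e' < e0" using e e0 unfolding e'_def by auto
      have "maxlone n (\<lambda>i. real (w i)) < 1 / real n" using wc c1 y1 unfolding y_def by linarith
      then obtain s :: nat where s: "s \<ge> 1" "maxlone n (\<lambda>i. real (w i)) = g s"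
        using int_case[OF wpos] unfolding g_def by force
      have "g s \<le> y" using wc c1 s unfolding y_def by linarith
      then have "s \<le> B" unfolding B_def g_def using g_bound[OF n0 ny] by blast
      then have "g s \<in> F" unfolding F_def using s by auto
      moreover have "dist (g s) x < e" unfolding dist_real_def using wc c1 s by linarith
      ultimately show "\<exists>z\<in>F. dist z x < e" by blast
    qed
    then have "x \<in> F" using closed_approachable[OF cF] by blast
    then obtain s where "s \<in> {1..B}" "x = g s" unfolding F_def by blast
    then show ?thesis unfolding x_def g_def by auto
  qed
qed

end
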